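(* Let $\mathcal C$ be a category and $n\ge0$. Every isomorphism in $Z^n(\mathcal C)$ is a degeneracy map.
   Context: Notation: for $n\ge 0$, $[n]$ denotes $\{0,\dots,n-1\}$; $\Delta_+$ is the category of these finite total orders and order-preserving maps. For monotone $\varphi:[n]\to[m]$ define $\hat\varphi:[m+1]\to[n+1]$ by $\hat\varphi(i)=\min(\{j\in[n]:\varphi(j)\ge i\}\cup\{n\})$. Zigzags: in a category $\mathcal C$, a zigzag $X$ of length $n$ is a diagram $X(r_0)\xrightarrow{x_0} X(s_0)\xleftarrow{x'_0} X(r_1)\to\cdots\xrightarrow{x_{n-1}} X(s_{n-1})\xleftarrow{x'_{n-1}} X(r_n)$. A zigzag map $f:X\to Y$ (lengths $n$, $m$) consists of a monotone $f_s:[n]\to[m]$, regular slices $f(r_i):X(r_{\hat{f_s}(i)})\to Y(r_i)$ for $0\le i\le m$ and singular slices $f(s_j):X(s_j)\to Y(s_{f_s(j)})$ for $0\le j<n$, such that for each $0\le i<m$: if $f_s^{-1}(i)\neq\emptyset$ with least element $p$, greatest $q$, then $f(s_p)\circ x_p=y_i\circ f(r_i)$, $f(s_q)\circ x'_q=y'_i\circ f(r_{i+1})$, $f(s_j)\circ x'_j=f(s_{j+1})\circ x_{j+1}$ for $p\le j<q$; if $f_s^{-1}(i)=\emptyset$ then $y_i\circ f(r_i)=y'_i\circ f(r_{i+1})$. Composition: $(g\circ f)_s=g_s\circ f_s$, $(g\circ f)(s_j)=g(s_{f_s(j)})\circ f(s_j)$, $(g\circ f)(r_i)=g(r_i)\circ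 f(r_{\hat{g_s}(i)})$. This gives a category $Z(\mathcal C)$; $Z^0(\mathcal C)=\mathcal C$, $Z^n(\mathcal C)=Z(Z^{n-1}(\mathcal C))$. $\pi:Z(\mathcal C)\to\Delta_+$ sends a zigzag of length $n$ to $[n]$ and $f$ to $f_s$; $f$ is $\pi$-vertical if $\pi(f)$ is an identity; $f:x\to y$ is $\pi$-cocartesian if for every $h:x\to y'$ and $u:\pi(y)\to\pi(y')$ with $u\circ\pi(f)=\pi(h)$ there is a unique $v:y\to y'$ with $v\circ f=h$, $\pi(v)=u$. Degeneracy maps in $Z^n(\mathcal C)$ (by induction on $n$): in $Z^0(\mathcal C)$ the isomorphisms; for $n\ge1$ the maps generated under composition by simple degeneracy maps (the $\pi$-cocartesian maps $f$ with $\pi(f)$ a monomorphism of $\Delta_+$) and parallel degeneracy maps (the $\pi$-vertical maps whose regular and singular slices are all degeneracy maps in $Z^{n-1}(\mathcal C)$). *)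

theory Defs
  imports Main
begin

record ('o,'m) cat =
  Ob   :: "'o set"
  Ar   :: "'m set"
  cdom :: "'m \<Rightarrow> 'o"
  ccod :: "'m \<Rightarrow> 'o"
  idn  :: "'o \<Rightarrow> 'm"
  comp :: "'m \<Rightarrow> 'm \<Rightarrow> 'm"   (* comp K g f = g \<circ> f *)

definition Hom :: "('o,'m,'x) cat_scheme \<Rightarrow> 'o \<Rightarrow> 'o \<Rightarrow> 'm set" where
  "Hom K x y = {f \<in> Ar K. cdom K f = x \<and> ccod K f = y}"

definition is_category :: "('o,'m) cat \<Rightarrow> bool" where
  "is_category K \<longleftrightarrow>
     (\<forall>f\<in>Ar K. cdom K f \<in> Ob K \<and> ccod K f \<in> Ob K) \<and>
     (\<forall>x\<in>Ob K. idn K x \<in> Hom K x x) \<and>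
     (\<forall>f\<in>Ar K. \<forall>g\<in>Ar K. ccod K f = cdom K g \<longrightarrow>
         comp K g f \<in> Hom K (cdom K f) (ccod K g)) \<and>
     (\<forall>f\<in>Ar K. comp K f (idn K (cdom K f)) = f \<and> comp K (idn K (ccod K f)) f = f) \<and>
     (\<forall>f\<in>Ar K. \<forall>g\<in>Ar K. \<forall>h\<in>Ar K. ccod K f = cdom K g \<longrightarrow> ccod K g = cdom K h \<longrightarrow>
         comp K h (comp K g f) = comp K (comp K h g) f)"

definition is_iso :: "('o,'m) cat \<Rightarrow> 'm \<Rightarrow> bool" where
  "is_iso K f \<longleftrightarrow> f \<in> Ar K \<and>
     (\<exists>g\<in>Ar K. cdom K g = ccod K f \<and> ccod K g = cdom K f \<and>
        comp K g f = idn K (cdom K f) \<and> comp K f g = idn K (ccod K f))"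

text \<open>A monotone map [n] \<rightarrow> [m] is represented by the list of its values.\<close>

definition delta_map :: "nat \<Rightarrow> nat \<Rightarrow> nat list \<Rightarrow> bool" where
  "delta_map n m \<phi> \<longleftrightarrow> length \<phi> = n \<and> (\<forall>j<n. \<phi> ! j < m) \<and>
      (\<forall>i j. i \<le> j \<and> j < n \<longrightarrow> \<phi> ! i \<le> \<phi> ! j)"

definition delta_mono :: "nat \<Rightarrow> nat list \<Rightarrow> bool" where
  "delta_mono m \<phi> \<longleftrightarrow> delta_map (length \<phi>) m \<phi> \<and>
     (\<forall>k a b. delta_map k (length \<phi>) a \<and> delta_map k (length \<phi>) b \<and>
        map ((!) \<phi>) a = map ((!) \<phi>) b \<longrightarrow> a = b)"

definition hat :: "nat list \<Rightarrow> nat \<Rightarrow> nat" where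
  "hat \<phi> i = (LEAST j. j = length \<phi> \<or> (j < length \<phi> \<and> i \<le> \<phi> ! j))"

datatype ('o,'m) zobj =
    OB 'o
  | OZ "('o,'m) zobj list" "('o,'m) zobj list" "('o,'m) zarr list" "('o,'m) zarr list"
    (* regular objects r_0..r_n, singular objects s_0..s_{n-1},
       forward maps x_i : r_i \<rightarrow> s_i, backward maps x'_i : r_{i+1} \<rightarrow> s_i *)
and ('o,'m) zarr =
    AB 'm
  | AZ "('o,'m) zobj" "('o,'m) zobj" "nat list" "('o,'m) zarr list" "('o,'m) zarr list"
    (* source, target, f_s, regular slices f(r_i), singular slices f(s_j) *)

definition zr :: "('o,'m) zobj \<Rightarrow> ('o,'m) zobj list" where
  "zr X = (case X of OZ r s a b \<Rightarrow> r | _ \<Rightarrow> [])"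
definition zs :: "('o,'m) zobj \<Rightarrow> ('o,'m) zobj list" where
  "zs X = (case X of OZ r s a b \<Rightarrow> s | _ \<Rightarrow> [])"
definition zx :: "('o,'m) zobj \<Rightarrow> ('o,'m) zarr list" where
  "zx X = (case X of OZ r s a b \<Rightarrow> a | _ \<Rightarrow> [])"
definition zy :: "('o,'m) zobj \<Rightarrow> ('o,'m) zarr list" where
  "zy X = (case X of OZ r s a b \<Rightarrow> b | _ \<Rightarrow> [])"
definition zlen :: "('o,'m) zobj \<Rightarrow> nat" where
  "zlen X = length (zs X)"

definition zdom :: "('o,'m) zarr \<Rightarrow> ('o,'m) zobj" where
  "zdom F = (case F of AZ X Y fs R S \<Rightarrow> X | _ \<Rightarrow> undefined)"
definition zcod :: "('o,'m) zarr \<Rightarrow> ('o,'m) zobj" where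
  "zcod F = (case F of AZ X Y fs R S \<Rightarrow> Y | _ \<Rightarrow> undefined)"
definition zfs :: "('o,'m) zarr \<Rightarrow> nat list" where
  "zfs F = (case F of AZ X Y fs R S \<Rightarrow> fs | _ \<Rightarrow> [])"
definition zR :: "('o,'m) zarr \<Rightarrow> ('o,'m) zarr list" where
  "zR F = (case F of AZ X Y fs R S \<Rightarrow> R | _ \<Rightarrow> [])"
definition zS :: "('o,'m) zarr \<Rightarrow> ('o,'m) zarr list" where
  "zS F = (case F of AZ X Y fs R S \<Rightarrow> S | _ \<Rightarrow> [])"

type_synonym ('o,'m) zcat = "(('o,'m) zobj, ('o,'m) zarr) cat"

definition lift :: "('o,'m) cat \<Rightarrow> ('o,'m) zcat" where
  "lift C = \<lparr> Ob = OB ` Ob C, Ar = AB ` Ar C,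
     cdom = (\<lambda>F. case F of AB f \<Rightarrow> OB (cdom C f) | _ \<Rightarrow> undefined),
     ccod = (\<lambda>F. case F of AB f \<Rightarrow> OB (ccod C f) | _ \<Rightarrow> undefined),
     idn = (\<lambda>X. case X of OB x \<Rightarrow> AB (idn C x) | _ \<Rightarrow> undefined),
     comp = (\<lambda>G F. case (G, F) of (AB g, AB f) \<Rightarrow> AB (comp C g f) | _ \<Rightarrow> undefined) \<rparr>"

definition zobj_ok :: "('o,'m) zcat \<Rightarrow> ('o,'m) zobj \<Rightarrow> bool" where
  "zobj_ok D X \<longleftrightarrow> (\<exists>rs ss xs ys. X = OZ rs ss xs ys \<and>
     length rs = Suc (length ss) \<and> length xs = length ss \<and> length ys = length ss \<and>
     set rs \<subseteq> Ob D \<and> set ss \<subseteq> Ob D \<and>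
     (\<forall>i<length ss. xs ! i \<in> Hom D (rs ! i) (ss ! i) \<and>
                    ys ! i \<in> Hom D (rs ! Suc i) (ss ! i)))"

definition zarr_ok :: "('o,'m) zcat \<Rightarrow> ('o,'m) zarr \<Rightarrow> bool" where
  "zarr_ok D F \<longleftrightarrow> (\<exists>X Y fs R S. F = AZ X Y fs R S \<and>
     zobj_ok D X \<and> zobj_ok D Y \<and>
     delta_map (zlen X) (zlen Y) fs \<and>
     length R = Suc (zlen Y) \<and> length S = zlen X \<and>
     (\<forall>i\<le>zlen Y. R ! i \<in> Hom D (zr X ! hat fs i) (zr Y ! i)) \<and>
     (\<forall>j<zlen X. S ! j \<in> Hom D (zs X ! j) (zs Y ! (fs ! j))) \<and>
     (\<forall>i<zlen Y.
        (let P = {j. j < zlen X \<and> fs ! j = i} in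
         if P \<noteq> {} then
           (let p = Min P; q = Max P in
             comp D (S ! p) (zx X ! p) = comp D (zx Y ! i) (R ! i) \<and>
             comp D (S ! q) (zy X ! q) = comp D (zy Y ! i) (R ! Suc i) \<and>
             (\<forall>j. p \<le> j \<and> j < q \<longrightarrow>
                 comp D (S ! j) (zy X ! j) = comp D (S ! Suc j) (zx X ! Suc j)))
         else comp D (zx Y ! i) (R ! i) = comp D (zy Y ! i) (R ! Suc i))))"

definition Zc :: "('o,'m) zcat \<Rightarrow> ('o,'m) zcat" where
  "Zc D = \<lparr> Ob = {X. zobj_ok D X}, Ar = {F. zarr_ok D F},
     cdom = zdom, ccod = zcod,
     idn = (\<lambda>X. AZ X X [0..<zlen X] (map (idn D) (zr X)) (map (idn D) (zs X))),
     comp = (\<lambda>G F. AZ (zdom F) (zcod G) (map (\<lambda>j. zfs G ! j) (zfs F))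
                (map (\<lambda>i. comp D (zR G ! i) (zR F ! hat (zfs G) i)) [0..<length (zR G)])
                (map (\<lambda>j. comp D (zS G ! (zfs F ! j)) (zS F ! j)) [0..<length (zS F)])) \<rparr>"

definition Zn :: "('o,'m) cat \<Rightarrow> nat \<Rightarrow> ('o,'m) zcat" where
  "Zn C n = (Zc ^^ n) (lift C)"

definition pi_vertical :: "('o,'m) zarr \<Rightarrow> bool" where
  "pi_vertical F \<longleftrightarrow> zlen (zdom F) = zlen (zcod F) \<and> zfs F = [0..<zlen (zdom F)]"

definition pi_cocartesian :: "('o,'m) zcat \<Rightarrow> ('o,'m) zarr \<Rightarrow> bool" where
  "pi_cocartesian D F \<longleftrightarrow> F \<in> Ar (Zc D) \<and>
     (\<forall>H\<in>Ar (Zc D). \<forall>u. zdom H = zdom F \<and> delta_map (zlen (zcod F)) (zlen (zcod H)) u \<and>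
        map (\<lambda>j. u ! j) (zfs F) = zfs H \<longrightarrow>
        (\<exists>!V. V \<in> Ar (Zc D) \<and> zdom V = zcod F \<and> zcod V = zcod H \<and>
              comp (Zc D) V F = H \<and> zfs V = u))"

inductive_set comp_closure :: "('o,'m) cat \<Rightarrow> 'm set \<Rightarrow> 'm set"
  for K :: "('o,'m) cat" and S :: "'m set" where
  base: "f \<in> S \<Longrightarrow> f \<in> comp_closure K S"
| step: "f \<in> comp_closure K S \<Longrightarrow> g \<in> comp_closure K S \<Longrightarrow> ccod K f = cdom K g \<Longrightarrow>
         comp K g f \<in> comp_closure K S"

fun degen :: "('o,'m) cat \<Rightarrow> nat \<Rightarrow> ('o,'m) zarr set" where
  "degen C 0 = {f. is_iso (lift C) f}"
| "degen C (Suc n) = comp_closure (Zc (Zn C n))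
     ({F. pi_cocartesian (Zn C n) F \<and> delta_mono (zlen (zcod F)) (zfs F)}
      \<union> {F. F \<in> Ar (Zc (Zn C n)) \<and> pi_vertical F \<and>
            set (zR F) \<subseteq> degen C n \<and> set (zS F) \<subseteq> degen C n})"

end

theory Submission
  imports Defs
begin

lemma strict_ge:
  assumes "\<forall>i j. i < j \<and> j < n \<longrightarrow> (\<phi>::nat list) ! i < \<phi> ! j"
  shows "j < n \<Longrightarrow> j \<le> \<phi> ! j"
proof (induction j)
  case 0 then show ?case by simp
next
  case (Suc j)
  then have "\<phi> ! j < \<phi> ! Suc j" using assms by auto
  with Suc show ?case by simp
qed

lemma delta_iso_id:
  assumes f: "delta_map n m fs" and g: "delta_map m n gs"
    and fg: "map ((!) gs) fs = [0..<n]" and gf: "map ((!) fs) gs = [0..<m]"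
  shows "n = m \<and> fs = [0..<n]"
proof -
  have lf: "length fs = n" and lg: "length gs = m" using f g by (auto simp: delta_map_def)
  have gfj: "gs ! (fs ! j) = j" if "j < n" for j
  proof -
    have "map ((!) gs) fs ! j = [0..<n] ! j" using fg by simp
    then show ?thesis using that lf by simp
  qed
  have fgj: "fs ! (gs ! j) = j" if "j < m" for j
  proof -
    have "map ((!) fs) gs ! j = [0..<m] ! j" using gf by simp
    then show ?thesis using that lg by simp
  qed
  have sf: "\<forall>i j. i < j \<and> j < n \<longrightarrow> fs ! i < fs ! j"
  proof (intro allI impI)
    fix i j assume "i < j \<and> j < n"
    moreover then have "fs ! i \<le> fs ! j" using f by (auto simp: delta_map_def)
    moreover have "fs ! i \<noteq> fs ! j" using gfj calculation by (metis less_trans nat_neq_iff)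
    ultimately show "fs ! i < fs ! j" by simp
  qed
  have sg: "\<forall>i j. i < j \<and> j < m \<longrightarrow> gs ! i < gs ! j"
  proof (intro allI impI)
    fix i j assume "i < j \<and> j < m"
    moreover then have "gs ! i \<le> gs ! j" using g by (auto simp: delta_map_def)
    moreover have "gs ! i \<noteq> gs ! j" using fgj calculation by (metis less_trans nat_neq_iff)
    ultimately show "gs ! i < gs ! j" by simp
  qed
  have nm: "n \<le> m"
  proof (cases n)
    case 0 then show ?thesis by simp
  next
    case (Suc k)
    then have "k \<le> fs ! k" using strict_ge[OF sf] by simp
    moreover have "fs ! k < m" using f Suc by (auto simp: delta_map_def)
    ultimately show ?thesis using Suc by simp
  qed
  have mn: "m \<le> n"
  proof (cases m)
    case 0 then show ?thesis by simp
  next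
    case (Suc k)
    then have "k \<le> gs ! k" using strict_ge[OF sg] by simp
    moreover have "gs ! k < n" using g Suc by (auto simp: delta_map_def)
    ultimately show ?thesis using Suc by simp
  qed
  have "fs ! j = j" if "j < n" for j
  proof -
    have a: "j \<le> fs ! j" using strict_ge[OF sf] that by simp
    have "fs ! j < m" using f that by (auto simp: delta_map_def)
    then have "fs ! j \<le> gs ! (fs ! j)" using strict_ge[OF sg] by simp
    then show ?thesis using a gfj that by simp
  qed
  then have "fs = [0..<n]" using lf by (simp add: list_eq_iff_nth_eq)
  then show ?thesis using nm mn by simp
qed

lemma hat_id: "i \<le> k \<Longrightarrow> hat [0..<k] i = i"
  unfolding hat_def
  by (rule Least_equality) auto

lemma iso_Zc:
  assumes "is_iso (Zc D) F"
  shows "F \<in> Ar (Zc D) \<and> pi_vertical F \<and> (\<forall>h\<in>set (zR F). is_iso D h) \<and> (\<forall>h\<in>set (zS F). is_iso D h)"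
proof -
  from assms obtain G where F: "zarr_ok D F" and G: "zarr_ok D G"
    and dG: "zdom G = zcod F" and cG: "zcod G = zdom F"
    and GF: "comp (Zc D) G F = idn (Zc D) (zdom F)"
    and FG: "comp (Zc D) F G = idn (Zc D) (zcod F)"
    unfolding is_iso_def by (auto simp: Zc_def)
  from F obtain X Y fs R S where Fd: "F = AZ X Y fs R S" and
     oX: "zobj_ok D X" and oY: "zobj_ok D Y" and
     dm: "delta_map (zlen X) (zlen Y) fs" and
     lR: "length R = Suc (zlen Y)" and lS: "length S = zlen X" and
     hR: "\<forall>i\<le>zlen Y. R ! i \<in> Hom D (zr X ! hat fs i) (zr Y ! i)" and
     hS: "\<forall>j<zlen X. S ! j \<in> Hom D (zs X ! j) (zs Y ! (fs ! j))"
    unfolding zarr_ok_def by blast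
  from G obtain X' Y' gs R' S' where Gd: "G = AZ X' Y' gs R' S'" and
     dm': "delta_map (zlen X') (zlen Y') gs" and
     lR': "length R' = Suc (zlen Y')" and lS': "length S' = zlen X'" and
     hR': "\<forall>i\<le>zlen Y'. R' ! i \<in> Hom D (zr X' ! hat gs i) (zr Y' ! i)" and
     hS': "\<forall>j<zlen X'. S' ! j \<in> Hom D (zs X' ! j) (zs Y' ! (gs ! j))"
    unfolding zarr_ok_def by blast
  have X': "X' = Y" and Y': "Y' = X" using dG cG Fd Gd by (auto simp: zdom_def zcod_def)
  from GF have GF1: "map ((!) gs) fs = [0..<zlen X]"
    and GF2: "map (\<lambda>i. comp D (R' ! i) (R ! hat gs i)) [0..<length R'] = map (idn D) (zr X)"
    and GF3: "map (\<lambda>j. comp D (S' ! (fs ! j)) (S ! j)) [0..<length S] = map (idn D) (zs X)"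
    by (auto simp: Zc_def Fd Gd zdom_def zcod_def zfs_def zR_def zS_def)
  from FG have FG1: "map ((!) fs) gs = [0..<zlen Y]"
    and FG2: "map (\<lambda>i. comp D (R ! i) (R' ! hat fs i)) [0..<length R] = map (idn D) (zr Y)"
    and FG3: "map (\<lambda>j. comp D (S ! (gs ! j)) (S' ! j)) [0..<length S'] = map (idn D) (zs Y)"
    by (auto simp: Zc_def Fd Gd zdom_def zcod_def zfs_def zR_def zS_def)
  have di: "zlen X = zlen Y \<and> fs = [0..<zlen X]"
    using delta_iso_id[OF dm _ GF1 FG1] dm' X' Y' by simp
  then have gi: "gs = [0..<zlen X]"
  proof -
    have "length gs = zlen X" using dm' X' di by (simp add: delta_map_def)
    moreover have "gs ! i = i" if "i < zlen X" for i
    proof -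
      have "gs ! i < zlen X" using dm' X' Y' di that by (simp add: delta_map_def)
      then have "fs ! (gs ! i) = gs ! i" using di by simp
      moreover have "map ((!) fs) gs ! i = [0..<zlen Y] ! i" using FG1 by simp
      ultimately show ?thesis using that di \<open>length gs = zlen X\<close> by simp
    qed
    ultimately show ?thesis by (simp add: list_eq_iff_nth_eq)
  qed
  have vert: "pi_vertical F" using di by (simp add: pi_vertical_def Fd zdom_def zcod_def zfs_def)
  have isoR: "is_iso D (R ! i)" if "i < length R" for i
  proof -
    have il: "i \<le> zlen X" using that lR di by simp
    have h1: "R ! i \<in> Hom D (zr X ! i) (zr Y ! i)" using hR il di hat_id by simp
    have h2: "R' ! i \<in> Hom D (zr Y ! i) (zr X ! i)" using hR' il di gi hat_id X' Y' by simp
    have e1: "comp D (R' ! i) (R ! i) = idn D (zr X ! i)"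
    proof -
      have "map (\<lambda>i. comp D (R' ! i) (R ! hat gs i)) [0..<length R'] ! i = map (idn D) (zr X) ! i"
        using GF2 by simp
      moreover have "length (zr X) = Suc (zlen X)" using oX
        by (auto simp: zobj_ok_def zr_def zlen_def zs_def)
      ultimately show ?thesis using il lR' Y' gi hat_id by (simp del: upt_Suc)
    qed
    have e2: "comp D (R ! i) (R' ! i) = idn D (zr Y ! i)"
    proof -
      have "map (\<lambda>i. comp D (R ! i) (R' ! hat fs i)) [0..<length R] ! i = map (idn D) (zr Y) ! i"
        using FG2 by simp
      moreover have "length (zr Y) = Suc (zlen Y)" using oY
        by (auto simp: zobj_ok_def zr_def zlen_def zs_def)
      ultimately show ?thesis using il lR di hat_id by (simp del: upt_Suc)
    qed
    show ?thesis using h1 h2 e1 e2 unfolding is_iso_def Hom_def by auto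
  qed
  have isoS: "is_iso D (S ! j)" if "j < length S" for j
  proof -
    have il: "j < zlen X" using that lS by simp
    have h1: "S ! j \<in> Hom D (zs X ! j) (zs Y ! j)" using hS il di by simp
    have h2: "S' ! j \<in> Hom D (zs Y ! j) (zs X ! j)" using hS' il di gi X' Y' by simp
    have e1: "comp D (S' ! j) (S ! j) = idn D (zs X ! j)"
    proof -
      have "map (\<lambda>j. comp D (S' ! (fs ! j)) (S ! j)) [0..<length S] ! j = map (idn D) (zs X) ! j"
        using GF3 by simp
      then show ?thesis using il lS di by (simp add: zlen_def)
    qed
    have e2: "comp D (S ! j) (S' ! j) = idn D (zs Y ! j)"
    proof -
      have "map (\<lambda>j. comp D (S ! (gs ! j)) (S' ! j)) [0..<length S'] ! j = map (idn D) (zs Y) ! j"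
        using FG3 by simp
      then show ?thesis using il lS' di gi X' by (simp add: zlen_def)
    qed
    show ?thesis using h1 h2 e1 e2 unfolding is_iso_def Hom_def by auto
  qed
  show ?thesis using F vert isoR isoS
    by (auto simp: Zc_def Fd zR_def zS_def in_set_conv_nth)
qed

theorem lemma3p4:
  fixes C :: "('o,'m) cat" and n :: nat and f :: "('o,'m) zarr"
  assumes "is_category C"
      and "is_iso (Zn C n) f"
  shows "f \<in> degen C n"
  using assms(2)
proof (induction n arbitrary: f)
  case 0
  then show ?case by (simp add: Zn_def)
next
  case (Suc n)
  have "is_iso (Zc (Zn C n)) f" using Suc.prems by (simp add: Zn_def)
  from iso_Zc[OF this] have
    "f \<in> Ar (Zc (Zn C n)) \<and> pi_vertical f \<and> set (zR f) \<subseteq> degen C n \<and> set (zS f) \<subseteq> degen C n"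
    using Suc.IH by blast
  then show ?case by (auto intro: comp_closure.base)
qed

end
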